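(* In the one-way trading setting, for every $\pi\ge1$, $$\Phi_\Delta(\pi)=\frac{\Delta}{\pi}\,(1+\ln\theta),\qquad \theta=M/m.$$
   Context: One-way trading: fix $\Delta>0$, $0<m\le M$, $\theta=M/m$. The revenue function at time $t$ is $g_t(v)=p(t)\,v$ on $[0,\Delta]$ with price $p(t)\in[m,M]$; an input is a finite price sequence $\sigma=(p(1),\dots,p(T))$, $T\ge1$. The offline optimum on $\sigma^{[1:t]}=(p(1),\dots,p(t))$ is $\eta_{OPT}(\sigma^{[1:t]})=\Delta\max_{s\le t}p(s)$. For $\pi\ge1$, CR-Pursuit($\pi$) sells at time $t$ the quantity $\bar v_t=\frac{\Delta}{\pi p(t)}\big(\max_{s\le t}p(s)-\max_{s\le t-1}p(s)\big)$, with the maximum over an empty set equal to $0$. $\Phi_\Delta(\pi)$ is the supremum over all finite inputs of $\sum_t\bar v_t$. *)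

theory Defs
  imports Complex_Main
begin

text \<open>An input is a nonempty finite price sequence sigma = (p(1),...,p(T)), encoded as a
  list; p(t) is the list element at position t - 1.\<close>

definition price :: "real list \<Rightarrow> nat \<Rightarrow> real" where
  "price \<sigma> t = \<sigma> ! (t - 1)"

definition valid_input :: "real \<Rightarrow> real \<Rightarrow> real list \<Rightarrow> bool" where
  "valid_input m M \<sigma> \<longleftrightarrow> \<sigma> \<noteq> [] \<and> (\<forall>t\<in>{1..length \<sigma>}. m \<le> price \<sigma> t \<and> price \<sigma> t \<le> M)"

definition run_max :: "real list \<Rightarrow> nat \<Rightarrow> real" where
  "run_max \<sigma> t = (if t = 0 then 0 else Max {price \<sigma> s | s. 1 \<le> s \<and> s \<le> t})"

definition eta_OPT :: "real \<Rightarrow> real list \<Rightarrow> nat \<Rightarrow> real" where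
  "eta_OPT \<Delta> \<sigma> t = \<Delta> * run_max \<sigma> t"

definition cr_pursuit_qty :: "real \<Rightarrow> real \<Rightarrow> real list \<Rightarrow> nat \<Rightarrow> real" where
  "cr_pursuit_qty \<Delta> \<pi> \<sigma> t = \<Delta> / (\<pi> * price \<sigma> t) * (run_max \<sigma> t - run_max \<sigma> (t - 1))"

definition total_sold :: "real \<Rightarrow> real \<Rightarrow> real list \<Rightarrow> real" where
  "total_sold \<Delta> \<pi> \<sigma> = (\<Sum>t = 1..length \<sigma>. cr_pursuit_qty \<Delta> \<pi> \<sigma> t)"

definition Phi :: "real \<Rightarrow> real \<Rightarrow> real \<Rightarrow> real \<Rightarrow> real" where
  "Phi \<Delta> m M \<pi> = Sup {total_sold \<Delta> \<pi> \<sigma> | \<sigma>. valid_input m M \<sigma>}"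

end

theory Submission
  imports Defs
begin

lemma price_set_Suc:
  "{price \<sigma> s | s. 1 \<le> s \<and> s \<le> Suc t} = insert (price \<sigma> (Suc t)) {price \<sigma> s | s. 1 \<le> s \<and> s \<le> t}"
  by (auto simp: le_Suc_eq)

lemma price_set_fin: "finite {price \<sigma> s | s. 1 \<le> s \<and> s \<le> t}"
proof -
  have "{price \<sigma> s | s. 1 \<le> s \<and> s \<le> t} = price \<sigma> ` {1..t}" by auto
  thus ?thesis by simp
qed

lemma run_max_1: "run_max \<sigma> 1 = price \<sigma> 1"
proof -
  have "{price \<sigma> s | s. 1 \<le> s \<and> s \<le> (1::nat)} = {price \<sigma> 1}" by (auto simp: le_antisym)
  thus ?thesis unfolding run_max_def by simp
qed

lemma run_max_Suc:
  assumes "t \<ge> 1"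
  shows "run_max \<sigma> (Suc t) = max (run_max \<sigma> t) (price \<sigma> (Suc t))"
proof -
  have ne: "{price \<sigma> s | s. 1 \<le> s \<and> s \<le> t} \<noteq> {}" using assms by auto
  show ?thesis using assms unfolding run_max_def price_set_Suc
    using Max_insert[OF price_set_fin ne, of "price \<sigma> (Suc t)"] by (simp add: max.commute)
qed

lemma run_max_bounds:
  assumes "valid_input m M \<sigma>" "1 \<le> t" "t \<le> length \<sigma>"
  shows "m \<le> run_max \<sigma> t \<and> run_max \<sigma> t \<le> M"
proof -
  let ?S = "{price \<sigma> s | s. 1 \<le> s \<and> s \<le> t}"
  have ne: "?S \<noteq> {}" using assms by auto
  have b: "\<forall>x\<in>?S. m \<le> x \<and> x \<le> M" using assms unfolding valid_input_def by auto
  have "Max ?S \<in> ?S" using Max_in[OF price_set_fin ne] .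
  hence "m \<le> Max ?S" using b by blast
  moreover have "Max ?S \<le> M" using b Max_le_iff[OF price_set_fin ne] by blast
  ultimately show ?thesis using assms unfolding run_max_def by simp
qed

lemma term_bound:
  fixes a p \<Delta> \<pi> :: real
  assumes a: "0 < a" and p: "0 < p" and D: "\<Delta> > 0" and pi: "\<pi> \<ge> 1"
  shows "\<Delta> / (\<pi> * p) * (max a p - a) \<le> \<Delta> / \<pi> * (ln (max a p) - ln a)"
proof (cases "p \<le> a")
  case True
  hence "max a p = a" by (rule max_absorb1)
  thus ?thesis by simp
next
  case False
  hence pa: "a < p" by simp
  have "ln (a/p) \<le> a/p - 1" using ln_le_minus_one a p by simp
  hence "(p - a)/p \<le> ln p - ln a" using a p by (simp add: ln_div diff_divide_distrib)
  hence "\<Delta>/\<pi> * ((p - a)/p) \<le> \<Delta>/\<pi> * (ln p - ln a)"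
    using D pi by (intro mult_left_mono) auto
  thus ?thesis using pa by (simp add: max_def)
qed

lemma partial_bound:
  assumes v: "valid_input m M \<sigma>" and m: "0 < m" and D: "\<Delta> > 0" and pi: "\<pi> \<ge> 1"
  shows "1 \<le> T \<Longrightarrow> T \<le> length \<sigma> \<Longrightarrow>
    (\<Sum>t = 1..T. cr_pursuit_qty \<Delta> \<pi> \<sigma> t) \<le> \<Delta>/\<pi> * (1 + ln (run_max \<sigma> T) - ln (price \<sigma> 1))"
proof (induction T)
  case 0 thus ?case by simp
next
  case (Suc T)
  show ?case
  proof (cases "T = 0")
    case True
    have p1: "price \<sigma> 1 \<ge> m" using v Suc.prems unfolding valid_input_def by auto
    have r1: "run_max \<sigma> (Suc 0) = price \<sigma> (Suc 0)" using run_max_1 by simp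
    show ?thesis using True p1 m D pi
      by (simp add: cr_pursuit_qty_def r1 run_max_def[of _ 0])
  next
    case False
    hence T1: "1 \<le> T" by simp
    have IH: "(\<Sum>t = 1..T. cr_pursuit_qty \<Delta> \<pi> \<sigma> t) \<le> \<Delta>/\<pi> * (1 + ln (run_max \<sigma> T) - ln (price \<sigma> 1))"
      using Suc T1 by simp
    have a: "run_max \<sigma> T \<ge> m" using run_max_bounds[OF v T1] Suc.prems by simp
    have p: "price \<sigma> (Suc T) \<ge> m" using v Suc.prems unfolding valid_input_def by auto
    have q: "cr_pursuit_qty \<Delta> \<pi> \<sigma> (Suc T) \<le> \<Delta> / \<pi> * (ln (run_max \<sigma> (Suc T)) - ln (run_max \<sigma> T))"
      unfolding cr_pursuit_qty_def run_max_Suc[OF T1] using term_bound[of "run_max \<sigma> T" "price \<sigma> (Suc T)" \<Delta> \<pi>] a p m D pi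
      by simp
    have "(\<Sum>t = 1..Suc T. cr_pursuit_qty \<Delta> \<pi> \<sigma> t) = (\<Sum>t = 1..T. cr_pursuit_qty \<Delta> \<pi> \<sigma> t) + cr_pursuit_qty \<Delta> \<pi> \<sigma> (Suc T)"
      by simp
    also have "\<dots> \<le> \<Delta>/\<pi> * (1 + ln (run_max \<sigma> T) - ln (price \<sigma> 1)) + \<Delta> / \<pi> * (ln (run_max \<sigma> (Suc T)) - ln (run_max \<sigma> T))"
      using IH q by linarith
    also have "\<dots> = \<Delta>/\<pi> * (1 + ln (run_max \<sigma> (Suc T)) - ln (price \<sigma> 1))"
      by (simp add: algebra_simps)
    finally show ?thesis .
  qed
qed

lemma upper:
  assumes v: "valid_input m M \<sigma>" and m: "0 < m" and D: "\<Delta> > 0" and pi: "\<pi> \<ge> 1"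
  shows "total_sold \<Delta> \<pi> \<sigma> \<le> \<Delta> / \<pi> * (1 + ln (M / m))"
proof -
  have L: "1 \<le> length \<sigma>" using v unfolding valid_input_def by (cases \<sigma>) auto
  have b: "m \<le> run_max \<sigma> (length \<sigma>) \<and> run_max \<sigma> (length \<sigma>) \<le> M" using run_max_bounds[OF v L] by simp
  have p1: "m \<le> price \<sigma> 1" using v L unfolding valid_input_def by auto
  have "ln (run_max \<sigma> (length \<sigma>)) \<le> ln M" using b m by simp
  moreover have "ln m \<le> ln (price \<sigma> 1)" using p1 m by simp
  moreover have "ln (M/m) = ln M - ln m" using b m by (simp add: ln_div)
  ultimately have "1 + ln (run_max \<sigma> (length \<sigma>)) - ln (price \<sigma> 1) \<le> 1 + ln (M/m)"
    by linarith
  hence "\<Delta>/\<pi> * (1 + ln (run_max \<sigma> (length \<sigma>)) - ln (price \<sigma> 1)) \<le> \<Delta> / \<pi> * (1 + ln (M / m))"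
    using D pi by (intro mult_left_mono) auto
  thus ?thesis using partial_bound[OF v m D pi L order_refl] unfolding total_sold_def by linarith
qed

definition geo :: "real \<Rightarrow> real \<Rightarrow> nat \<Rightarrow> real list" where
  "geo m u n = map (\<lambda>k. m * exp (real k * u)) [0..<Suc n]"

lemma geo_price: "1 \<le> t \<Longrightarrow> t \<le> Suc n \<Longrightarrow> price (geo m u n) t = m * exp (real (t - 1) * u)"
proof -
  assume a: "1 \<le> t" "t \<le> Suc n"
  have "[0..<Suc n] ! (t-1) = t - 1" using a by (simp del: upt_Suc)
  thus ?thesis using a unfolding price_def geo_def by (simp del: upt_Suc add: of_nat_diff)
qed

lemma geo_valid:
  assumes m: "0 < m" "m \<le> M" and u: "0 \<le> u" "real n * u \<le> ln (M/m)"
  shows "valid_input m M (geo m u n)"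
  unfolding valid_input_def
proof (intro conjI ballI)
  show "geo m u n \<noteq> []" unfolding geo_def by simp
  fix t assume t: "t \<in> {1..length (geo m u n)}"
  hence t1: "1 \<le> t" "t \<le> Suc n" unfolding geo_def by auto
  have e: "1 \<le> exp (real (t - 1) * u)" using u by simp
  show "m \<le> price (geo m u n) t" using geo_price[OF t1] e m by simp
  have "real (t - 1) * u \<le> real n * u" using t1 u by (intro mult_right_mono) auto
  hence "exp (real (t - 1) * u) \<le> exp (ln (M/m))" using u by simp
  also have "\<dots> = M/m" using m by simp
  finally have "m * exp (real (t - 1) * u) \<le> M" using m by (simp add: pos_le_divide_eq mult.commute)
  thus "price (geo m u n) t \<le> M" using geo_price[OF t1] m by simp
qed

lemma geo_run_max:
  assumes u: "0 \<le> u" and m: "0 < m"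
  shows "1 \<le> t \<Longrightarrow> t \<le> Suc n \<Longrightarrow> run_max (geo m u n) t = m * exp (real (t - 1) * u)"
proof (induction t)
  case 0 thus ?case by simp
next
  case (Suc t)
  show ?case
  proof (cases "t = 0")
    case True thus ?thesis using run_max_1[of "geo m u n"] geo_price[of 1 n m u] by simp
  next
    case False
    hence t1: "1 \<le> t" by simp
    have "run_max (geo m u n) (Suc t) = max (m * exp (real (t - 1) * u)) (m * exp (real t * u))"
      using run_max_Suc[OF t1] Suc t1 geo_price[of "Suc t" n m u] by simp
    also have "\<dots> = m * exp (real t * u)"
    proof -
      have "real (t - 1) * u \<le> real t * u" using u t1 by (intro mult_right_mono) auto
      hence "m * exp (real (t - 1) * u) \<le> m * exp (real t * u)" using m by simp
      thus ?thesis by (simp add: max_absorb2)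
    qed
    finally show ?thesis by simp
  qed
qed

lemma geo_total:
  assumes u: "0 \<le> u" and m: "0 < m"
  shows "total_sold \<Delta> \<pi> (geo m u n) = \<Delta>/\<pi> * (1 + real n * (1 - exp (- u)))"
proof -
  have len: "length (geo m u n) = Suc n" unfolding geo_def by simp
  have r0: "run_max (geo m u n) 0 = 0" by (simp add: run_max_def)
  have r1: "run_max (geo m u n) 1 = m" using geo_run_max[OF u m, of 1 n] by simp
  have p1: "price (geo m u n) 1 = m" using geo_price[of 1 n m u] by simp
  have q1: "cr_pursuit_qty \<Delta> \<pi> (geo m u n) 1 = \<Delta>/\<pi>"
    unfolding cr_pursuit_qty_def r1 p1 using r0 m by simp
  have q2: "cr_pursuit_qty \<Delta> \<pi> (geo m u n) t = \<Delta>/\<pi> * (1 - exp (- u))" if t: "t \<in> {Suc 1..Suc n}" for t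
  proof -
    define k where "k = t - 2"
    have k: "t = Suc (Suc k)" using t unfolding k_def by auto
    have kn: "Suc k \<le> n" using t k by simp
    have A: "run_max (geo m u n) t = m * exp (real (Suc k) * u)"
      using geo_run_max[OF u m, of t n] t k by simp
    have B: "run_max (geo m u n) (t - 1) = m * exp (real k * u)"
      using geo_run_max[OF u m, of "t-1" n] t k by simp
    have P: "price (geo m u n) t = m * exp (real (Suc k) * u)"
      using geo_price[of t n m u] t k by simp
    have ee: "exp (real k * u) = exp (real (Suc k) * u) * exp (- u)"
      by (simp add: exp_add[symmetric] algebra_simps)
    define E where "E = exp (real (Suc k) * u)"
    have E0: "m * E \<noteq> 0" using m unfolding E_def by simp
    have "\<Delta> / (\<pi> * (m * E)) * (m * E - m * (E * exp (- u))) = \<Delta> / (\<pi> * (m * E)) * ((m * E) * (1 - exp (- u)))"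
      by (simp add: algebra_simps)
    also have "\<dots> = \<Delta>/\<pi> * (1 - exp (- u))" using E0 by simp
    finally show ?thesis unfolding cr_pursuit_qty_def A B P ee E_def[symmetric] .
  qed
  have "total_sold \<Delta> \<pi> (geo m u n) = cr_pursuit_qty \<Delta> \<pi> (geo m u n) 1 + (\<Sum>t = Suc 1..Suc n. cr_pursuit_qty \<Delta> \<pi> (geo m u n) t)"
    unfolding total_sold_def len by (subst sum.atLeast_Suc_atMost) auto
  also have "\<dots> = \<Delta>/\<pi> + (\<Sum>t = Suc 1..Suc n. \<Delta>/\<pi> * (1 - exp (- u)))"
    using q1 q2 by simp
  also have "\<dots> = \<Delta>/\<pi> * (1 + real n * (1 - exp (- u)))"
    by (simp add: algebra_simps)
  finally show ?thesis .
qed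

lemma exp_lemma:
  fixes u :: real assumes "0 \<le> u" shows "u - u^2 \<le> 1 - exp (- u)"
proof -
  have "1 + u \<le> exp u" by (rule exp_ge_add_one_self)
  hence "exp (- u) \<le> 1 / (1 + u)" using assms by (simp add: exp_minus field_simps)
  moreover have "u - u^2 \<le> 1 - 1/(1+u)"
  proof -
    have "(u - u^2) * (1+u) \<le> u" using assms by (simp add: algebra_simps power2_eq_square)
    thus ?thesis using assms by (simp add: field_simps)
  qed
  ultimately show ?thesis by linarith
qed

theorem mainTheorem12:
  fixes \<Delta> m M \<pi> :: real
  assumes "\<Delta> > 0" and "0 < m" and "m \<le> M" and "\<pi> \<ge> 1"
  shows "Phi \<Delta> m M \<pi> = \<Delta> / \<pi> * (1 + ln (M / m))"
  unfolding Phi_def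
proof (rule cSup_eq_non_empty)
  let ?L = "ln (M/m)"
  have L0: "0 \<le> ?L" using assms by simp
  show "{total_sold \<Delta> \<pi> \<sigma> |\<sigma>. valid_input m M \<sigma>} \<noteq> {}"
    using geo_valid[of m M 0 0] assms by auto
  show "\<And>x. x \<in> {total_sold \<Delta> \<pi> \<sigma> |\<sigma>. valid_input m M \<sigma>} \<Longrightarrow> x \<le> \<Delta> / \<pi> * (1 + ?L)"
    using upper assms by blast
  fix y assume y: "\<And>x. x \<in> {total_sold \<Delta> \<pi> \<sigma> |\<sigma>. valid_input m M \<sigma>} \<Longrightarrow> x \<le> y"
  show "\<Delta> / \<pi> * (1 + ?L) \<le> y"
  proof (rule ccontr)
    assume "\<not> ?thesis"
    hence eps: "0 < \<Delta> / \<pi> * (1 + ?L) - y" by simp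
    define c where "c = \<Delta> / \<pi> * ?L^2"
    have c0: "0 \<le> c" unfolding c_def using assms by simp
    obtain n :: nat where n: "c / (\<Delta> / \<pi> * (1 + ?L) - y) < real n"
      using reals_Archimedean2 by blast
    have npos: "0 < real n" using n c0 eps by (smt (verit) divide_nonneg_pos)
    define u where "u = ?L / real n"
    have u0: "0 \<le> u" unfolding u_def using L0 by simp
    have nu: "real n * u = ?L" unfolding u_def using npos by simp
    have v: "valid_input m M (geo m u n)" using geo_valid[OF assms(2,3) u0] nu by simp
    have "total_sold \<Delta> \<pi> (geo m u n) \<le> y" using y v by blast
    hence T: "\<Delta>/\<pi> * (1 + real n * (1 - exp (- u))) \<le> y" using geo_total[OF u0 assms(2)] by simp
    have "real n * (u - u^2) \<le> real n * (1 - exp (-u))"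
      using exp_lemma[OF u0] npos by (intro mult_left_mono) auto
    moreover have "real n * (u - u^2) = ?L - ?L^2 / real n"
      unfolding u_def using npos by (simp add: field_simps power2_eq_square)
    ultimately have "?L - ?L^2 / real n \<le> real n * (1 - exp (-u))" by simp
    hence "\<Delta>/\<pi> * (1 + (?L - ?L^2 / real n)) \<le> \<Delta>/\<pi> * (1 + real n * (1 - exp (- u)))"
      using assms by (intro mult_left_mono) auto
    with T have "\<Delta>/\<pi> * (1 + ?L) - c / real n \<le> y"
      unfolding c_def by (simp add: algebra_simps)
    moreover have "c / real n < \<Delta> / \<pi> * (1 + ?L) - y"
      using n eps npos by (simp add: field_simps)
    ultimately show False by simp
  qed
qed

end
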